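(* Let $S=(S_n)_{n\in\mathbb N}$ be the simple random walk on $\mathbb Z^d$ started at $0$, on a probability space $(\Sigma,\mathcal E,\mathbf P)$. Let $\eta=(\eta(n,x))_{(n,x)\in\mathbb N\times\mathbb Z^d}$ be i.i.d. non-constant real random variables on a probability space $(\Omega,\mathcal F,\mathbb P)$. Let $\beta>0$, assume $\mathbb E e^{\beta|\eta(0,0)|}<\infty$, and let $\lambda(s)=\ln\mathbb E e^{s\eta(0,0)}$. Set $K=2\exp(\lambda(\beta)+\lambda(-\beta))$ and $H_n(S)=\sum_{j=1}^n\eta(j,S_j)$. Let $(f_n)_{n\ge1}$ be a sequence of bounded nonnegative functions on $\mathbb R^d$ such that $\mathbf P(f_n(S_n)>0)\neq0$ for all $n\ge1$, and set $Y_n=\mathbf E\big[f_n(S_n)e^{\beta H_n(S)}\big]$. Then for all $n\ge1$, for both signs $\pm$, $$\mathbb E e^{\pm t(\ln Y_n-\mathbb E\ln Y_n)}\le\exp(nKt^2)\quad\text{for all }t\in[0,1],$$ and $$\mathbb P\Big(\pm\tfrac1n(\ln Y_n-\mathbb E\ln Y_n)>x\Big)\le\begin{cases}\exp\big(-\frac{nx^2}{4K}\big) & \text{if } x\in(0,2K],\\ \exp(-n(x-K)) & \text{if } x\in(2K,\infty).\end{cases}$$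
   Context: $\mathbf E$ is expectation with respect to $\mathbf P$ (over the walk, environment fixed); $\mathbb E$ is expectation with respect to $\mathbb P$ (over the environment). *)

theory Defs
  imports "HOL-Probability.Probability"
begin

text \<open>Simple random walk on Z^d (d = CARD('d)), started at 0. Its law is the uniform
  distribution on nearest-neighbour step sequences, so the walk expectation of a path
  functional is the average over all (2d)^n step sequences of length n.\<close>

definition unit_steps :: "(int^'d::finite) set" where
  "unit_steps = {v. \<exists>i. v = axis i 1 \<or> v = axis i (-1)}"

definition walk_paths :: "nat \<Rightarrow> (int^'d::finite) list set" where
  "walk_paths n = {xs. length xs = n \<and> set xs \<subseteq> unit_steps}"

definition walk_pos :: "(int^'d::finite) list \<Rightarrow> nat \<Rightarrow> int^'d" where
  "walk_pos xs j = sum_list (take j xs)"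

definition walkE :: "nat \<Rightarrow> ((nat \<Rightarrow> int^'d::finite) \<Rightarrow> real) \<Rightarrow> real" where
  "walkE n F = (\<Sum>xs\<in>walk_paths n. F (walk_pos xs)) / real (card (walk_paths n :: (int^'d) list set))"

definition to_real_vec :: "int^'d::finite \<Rightarrow> real^'d" where
  "to_real_vec x = (\<chi> i. real_of_int (x $ i))"

definition partition_Y ::
  "real \<Rightarrow> ('w \<Rightarrow> nat \<times> (int^'d::finite) \<Rightarrow> real) \<Rightarrow> (nat \<Rightarrow> real^'d \<Rightarrow> real)
     \<Rightarrow> nat \<Rightarrow> 'w \<Rightarrow> real" where
  "partition_Y \<beta> \<eta> f n \<omega> =
     walkE n (\<lambda>S. f n (to_real_vec (S n)) * exp (\<beta> * (\<Sum>j=1..n. \<eta> \<omega> (j, S j))))"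

end

theory Submission
  imports Defs
begin


lemma psi_series: "exp x - 1 - x = (\<Sum>n. inverse (fact (n+2)) * x^(n+2))" for x :: real
  using exp_first_two_terms[of x] by simp

lemma psi_summable: "summable (\<lambda>n. inverse (fact (n+2)) * (x::real)^(n+2))"
  using summable_ignore_initial_segment[OF summable_exp[of x], of 2] by simp

lemma psi_mono_abs: "exp x - 1 - x \<le> exp \<bar>x\<bar> - 1 - \<bar>x\<bar>" for x :: real
  unfolding psi_series
  apply (rule suminf_le[OF _ psi_summable psi_summable])
proof -
  fix n
  have "x^(n+2) \<le> \<bar>x\<bar>^(n+2)" by (metis abs_ge_self power_abs)
  then show "inverse (fact (n+2)) * x^(n+2) \<le> inverse (fact (n+2)) * \<bar>x\<bar>^(n+2)"
    by (intro mult_left_mono) auto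
qed

lemma psi_scale: fixes a :: real assumes "0 \<le> t" "t \<le> 1" "0 \<le> a"
  shows "exp (t*a) - 1 - t*a \<le> t^2 * (exp a - 1 - a)"
proof -
  have "(\<Sum>n. inverse (fact (n+2)) * (t*a)^(n+2)) \<le> (\<Sum>n. t^2 * (inverse (fact (n+2)) * a^(n+2)))"
  proof (rule suminf_le[OF _ psi_summable])
    show "summable (\<lambda>n. t^2 * (inverse (fact (n+2)) * a^(n+2)))"
      by (intro summable_mult psi_summable)
    fix n
    have "t^(n+2) \<le> t^2" using assms by (intro power_decreasing) auto
    then have "t^(n+2) * a^(n+2) \<le> t^2 * a^(n+2)" using assms by (intro mult_right_mono) auto
    then have "inverse (fact (n+2)) * (t^(n+2) * a^(n+2)) \<le> inverse (fact (n+2)) * (t^2 * a^(n+2))"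
      by (intro mult_left_mono) auto
    then show "inverse (fact (n+2)) * (t*a)^(n+2) \<le> t^2 * (inverse (fact (n+2)) * a^(n+2))"
      by (simp only: power_mult_distrib mult.left_commute)
  qed
  also have "\<dots> = t^2 * (\<Sum>n. inverse (fact (n+2)) * a^(n+2))"
    by (rule suminf_mult[OF psi_summable])
  finally show ?thesis unfolding psi_series .
qed

lemma exp_quad: fixes u :: real assumes "0 \<le> t" "t \<le> 1"
  shows "exp (t*u) \<le> 1 + t*u + t^2*(exp u + exp (-u))"
proof -
  have "exp (t*u) - 1 - t*u \<le> exp (t*\<bar>u\<bar>) - 1 - t*\<bar>u\<bar>"
    using psi_mono_abs[of "t*u"] assms by (simp add: abs_mult)
  also have "\<dots> \<le> t^2 * (exp \<bar>u\<bar> - 1 - \<bar>u\<bar>)" by (rule psi_scale) (use assms in auto)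
  also have "\<dots> \<le> t^2 * (exp u + exp (-u))"
    by (intro mult_left_mono) (auto simp: abs_if intro: order.trans[OF _ less_imp_le[OF exp_gt_zero]])
  finally show ?thesis by simp
qed



lemma jensen_exp:
  assumes Q: "prob_space Q" and g: "integrable Q g"
  shows "ennreal (exp (\<integral>x. g x \<partial>Q)) \<le> (\<integral>\<^sup>+x. exp (g x) \<partial>Q)"
proof (cases "(\<integral>\<^sup>+x. exp (g x) \<partial>Q) = \<infinity>")
  case True then show ?thesis by simp
next
  case False
  interpret prob_space Q by fact
  have gm: "g \<in> borel_measurable Q" using g by auto
  have ie: "integrable Q (\<lambda>x. exp (g x))"
    by (rule integrableI_bounded) (use False gm in \<open>auto simp: top.not_eq_extremum\<close>)
  define c where "c = (\<integral>x. g x \<partial>Q)"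
  have "exp c = (\<integral>x. exp c * (1 + (g x - c)) \<partial>Q)"
    using g by (simp add: c_def prob_space)
  also have "\<dots> \<le> (\<integral>x. exp (g x) \<partial>Q)"
  proof (rule integral_mono)
    show "integrable Q (\<lambda>x. exp c * (1 + (g x - c)))" using g by auto
    show "integrable Q (\<lambda>x. exp (g x))" by fact
    fix x
    have "exp c * (1 + (g x - c)) \<le> exp c * exp (g x - c)"
      by (intro mult_left_mono exp_ge_add_one_self) auto
    then show "exp c * (1 + (g x - c)) \<le> exp (g x)" by (simp add: exp_diff)
  qed
  finally have "exp c \<le> (\<integral>x. exp (g x) \<partial>Q)" .
  moreover have "(\<integral>\<^sup>+x. exp (g x) \<partial>Q) = ennreal (\<integral>x. exp (g x) \<partial>Q)"
    by (rule nn_integral_eq_integral[OF ie]) auto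
  ultimately show ?thesis by (simp add: c_def)
qed

lemma t_lemma:
  assumes Q: "prob_space Q" and D: "integrable Q D" and D0: "(\<integral>x. D x \<partial>Q) = 0"
    and bnd: "(\<integral>\<^sup>+x. exp (D x) \<partial>Q) + (\<integral>\<^sup>+x. exp (- D x) \<partial>Q) \<le> ennreal K"
    and K0: "0 \<le> K" and t: "0 \<le> t" "t \<le> 1" and \<sigma>: "\<sigma> \<in> {1, -1::real}"
  shows "(\<integral>\<^sup>+x. exp (\<sigma> * t * D x) \<partial>Q) \<le> ennreal (exp (K * t^2))"
proof -
  interpret prob_space Q by fact
  have Dm: "D \<in> borel_measurable Q" using D by auto
  have f1: "(\<integral>\<^sup>+x. exp (D x) \<partial>Q) < \<infinity>" and f2: "(\<integral>\<^sup>+x. exp (- D x) \<partial>Q) < \<infinity>"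
  proof -
    have "(\<integral>\<^sup>+x. exp (D x) \<partial>Q) \<le> ennreal K"
      using bnd by (rule order.trans[rotated]) (rule add_increasing2, auto)
    moreover have "(\<integral>\<^sup>+x. exp (- D x) \<partial>Q) \<le> ennreal K"
      using bnd by (rule order.trans[rotated]) (rule add_increasing, auto)
    ultimately show "(\<integral>\<^sup>+x. exp (D x) \<partial>Q) < \<infinity>" "(\<integral>\<^sup>+x. exp (- D x) \<partial>Q) < \<infinity>"
      by (auto simp: le_less_trans)
  qed
  have i1: "integrable Q (\<lambda>x. exp (D x))"
    by (rule integrableI_bounded) (use f1 Dm in auto)
  have i2: "integrable Q (\<lambda>x. exp (- D x))"
    by (rule integrableI_bounded) (use f2 Dm in auto)
  have e1: "(\<integral>\<^sup>+x. exp (D x) \<partial>Q) = ennreal (\<integral>x. exp (D x) \<partial>Q)"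
    by (rule nn_integral_eq_integral[OF i1]) auto
  have e2: "(\<integral>\<^sup>+x. exp (- D x) \<partial>Q) = ennreal (\<integral>x. exp (- D x) \<partial>Q)"
    by (rule nn_integral_eq_integral[OF i2]) auto
  have Kb: "(\<integral>x. exp (D x) \<partial>Q) + (\<integral>x. exp (- D x) \<partial>Q) \<le> K"
  proof -
    have n1: "0 \<le> (\<integral>x. exp (D x) \<partial>Q)" and n2: "0 \<le> (\<integral>x. exp (- D x) \<partial>Q)"
      by (auto intro!: integral_nonneg_AE)
    have "ennreal ((\<integral>x. exp (D x) \<partial>Q) + (\<integral>x. exp (- D x) \<partial>Q)) \<le> ennreal K"
      using bnd unfolding e1 e2 by (subst ennreal_plus[OF n1 n2])
    then show ?thesis using K0 by (simp only: ennreal_le_iff)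
  qed
  define h where "h x = 1 + \<sigma> * t * D x + t^2 * (exp (D x) + exp (- D x))" for x
  have hi: "integrable Q h" unfolding h_def using D i1 i2 by auto
  have pt: "exp (\<sigma> * t * D x) \<le> h x" for x
    using \<sigma> exp_quad[OF t, of "\<sigma> * D x"] by (auto simp: h_def algebra_simps)
  have "(\<integral>\<^sup>+x. exp (\<sigma> * t * D x) \<partial>Q) \<le> (\<integral>\<^sup>+x. h x \<partial>Q)"
    by (intro nn_integral_mono ennreal_leI pt)
  also have "\<dots> = ennreal (\<integral>x. h x \<partial>Q)"
    by (rule nn_integral_eq_integral[OF hi]) (use pt in \<open>auto intro: order.trans[OF less_imp_le[OF exp_gt_zero]]\<close>)
  also have "(\<integral>x. h x \<partial>Q) = 1 + t^2 * ((\<integral>x. exp (D x) \<partial>Q) + (\<integral>x. exp (- D x) \<partial>Q))"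
    unfolding h_def using D i1 i2 D0 by (simp add: prob_space)
  also have "\<dots> \<le> 1 + K * t^2" using mult_left_mono[OF Kb, of "t^2"] by (simp add: mult.commute)
  also have "\<dots> \<le> exp (K * t^2)" using exp_ge_add_one_self[of "K*t^2"] by linarith
  finally show ?thesis by (simp add: ennreal_leI)
qed



lemma am_hm:
  fixes \<alpha> u :: "'q \<Rightarrow> real"
  assumes "finite Q" "\<And>q. q \<in> Q \<Longrightarrow> 0 \<le> \<alpha> q" "(\<Sum>q\<in>Q. \<alpha> q) = 1" "\<And>q. q \<in> Q \<Longrightarrow> 0 < u q"
  shows "inverse (\<Sum>q\<in>Q. \<alpha> q * u q) \<le> (\<Sum>q\<in>Q. \<alpha> q * inverse (u q))"
proof -
  have ne: "Q \<noteq> {}" using assms(3) by auto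
  have "convex_on {0<..} (inverse :: real \<Rightarrow> real)"
    by (rule convex_on_inverse) auto
  from convex_on_sum[OF assms(1) ne this assms(3), of u] assms(2,4)
  show ?thesis by simp
qed

locale polymer = prob_space \<mu> for \<mu> :: "real measure" +
  fixes \<beta> :: real
  assumes sets_mu: "sets \<mu> = sets borel" and beta_pos: "0 < \<beta>"
    and expint: "integrable \<mu> (\<lambda>v. exp (\<beta> * \<bar>v\<bar>))"
begin

definition "L = (\<integral>v. exp (\<beta> * v) \<partial>\<mu>)"
definition "L' = (\<integral>v. exp (- \<beta> * v) \<partial>\<mu>)"

lemma meas_mu: "h \<in> borel_measurable borel \<Longrightarrow> h \<in> borel_measurable \<mu>"
  using measurable_cong_sets[OF sets_mu refl] by blast

lemma int_exp_pos: "integrable \<mu> (\<lambda>v. exp (\<beta> * v))"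
  by (rule Bochner_Integration.integrable_bound[OF expint]) (auto intro!: meas_mu simp: abs_mult beta_pos less_imp_le)

lemma int_exp_neg: "integrable \<mu> (\<lambda>v. exp (- \<beta> * v))"
  by (rule Bochner_Integration.integrable_bound[OF expint]) (use beta_pos in \<open>auto intro!: meas_mu AE_I2 simp: abs_if\<close>)

lemma int_abs: "integrable \<mu> (\<lambda>v. \<bar>v\<bar>)"
proof -
  have "integrable \<mu> (\<lambda>v. exp (\<beta> * \<bar>v\<bar>) / \<beta>)" using expint by auto
  then show ?thesis
  proof (rule Bochner_Integration.integrable_bound)
    show "(\<lambda>v. \<bar>v\<bar>) \<in> borel_measurable \<mu>" by (intro meas_mu) auto
    show "AE x in \<mu>. norm \<bar>x\<bar> \<le> norm (exp (\<beta> * \<bar>x\<bar>) / \<beta>)"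
    proof (intro AE_I2)
      fix x
      have "\<beta> * \<bar>x\<bar> \<le> exp (\<beta> * \<bar>x\<bar>)" using exp_ge_add_one_self[of "\<beta> * \<bar>x\<bar>"] by linarith
      then show "norm \<bar>x\<bar> \<le> norm (exp (\<beta> * \<bar>x\<bar>) / \<beta>)" using beta_pos by (simp add: field_simps)
    qed
  qed
qed

lemma pos_int: fixes h :: "real \<Rightarrow> real"
  assumes "integrable \<mu> h" "\<And>v. 0 < h v" shows "0 < (\<integral>v. h v \<partial>\<mu>)"
proof -
  have "0 \<le> (\<integral>v. h v \<partial>\<mu>)" by (rule integral_nonneg_AE) (use assms(2) in \<open>auto intro: less_imp_le\<close>)
  moreover have "(\<integral>v. h v \<partial>\<mu>) \<noteq> 0"
  proof
    assume "(\<integral>v. h v \<partial>\<mu>) = 0"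
    then have "AE v in \<mu>. h v = 0"
      using integral_nonneg_eq_0_iff_AE[OF assms(1)] assms(2) by (auto intro: less_imp_le)
    then have "AE v in \<mu>. False" by eventually_elim (metis assms(2) less_irrefl)
    then show False by simp
  qed
  ultimately show ?thesis by linarith
qed

lemma L_pos: "0 < L" unfolding L_def by (rule pos_int[OF int_exp_pos]) auto
lemma L'_pos: "0 < L'" unfolding L'_def by (rule pos_int[OF int_exp_neg]) auto

end



context polymer begin

lemma prob_PM: "prob_space (PiM I (\<lambda>_. \<mu>))"
  by (rule prob_space_PiM) (rule prob_space_axioms)

lemma fin_PM: "finite_measure (PiM I (\<lambda>_. \<mu>))"
  using prob_PM[of I] by (simp add: prob_space_def)

lemma comp_meas: "i \<in> I \<Longrightarrow> (\<lambda>e. e i) \<in> borel_measurable (PiM I (\<lambda>_. \<mu>))"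
  using measurable_component_singleton[of i I "\<lambda>_. \<mu>"] measurable_cong_sets[OF refl sets_mu] by blast

lemma distr_comp: "i \<in> I \<Longrightarrow> distr (PiM I (\<lambda>_. \<mu>)) \<mu> (\<lambda>e. e i) = \<mu>"
  by (rule distr_PiM_component) (auto intro: prob_space_axioms)

lemma comp_nn: assumes "i \<in> I" "g \<in> borel_measurable borel"
  shows "(\<integral>\<^sup>+e. g (e i) \<partial>PiM I (\<lambda>_. \<mu>)) = (\<integral>\<^sup>+v. g v \<partial>\<mu>)"
proof -
  have "(\<integral>\<^sup>+v. g v \<partial>\<mu>) = (\<integral>\<^sup>+v. g v \<partial>distr (PiM I (\<lambda>_. \<mu>)) \<mu> (\<lambda>e. e i))"
    using distr_comp[OF assms(1)] by simp
  also have "\<dots> = (\<integral>\<^sup>+e. g (e i) \<partial>PiM I (\<lambda>_. \<mu>))"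
    by (rule nn_integral_distr) (use assms meas_mu measurable_component_singleton in auto)
  finally show ?thesis ..
qed

lemma comp_int: fixes g :: "real \<Rightarrow> real" assumes "i \<in> I" "integrable \<mu> g"
  shows "integrable (PiM I (\<lambda>_. \<mu>)) (\<lambda>e. g (e i))"
proof -
  have "integrable (distr (PiM I (\<lambda>_. \<mu>)) \<mu> (\<lambda>e. e i)) g"
    using distr_comp[OF assms(1)] assms(2) by simp
  then show ?thesis
    using integrable_distr_eq[OF measurable_component_singleton[of i I "\<lambda>_. \<mu>", OF assms(1)] borel_measurable_integrable[OF assms(2)]]
    by simp
qed

definition hs :: "('q \<Rightarrow> nat \<Rightarrow> 's) \<Rightarrow> nat \<Rightarrow> 'q \<Rightarrow> (nat \<times> 's \<Rightarrow> real) \<Rightarrow> real" where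
  "hs \<pi> m q e = (\<Sum>j=1..m. e (j, \<pi> q j))"

definition Phi :: "'q set \<Rightarrow> ('q \<Rightarrow> real) \<Rightarrow> ('q \<Rightarrow> nat \<Rightarrow> 's) \<Rightarrow> nat \<Rightarrow> (nat \<times> 's \<Rightarrow> real) \<Rightarrow> real" where
  "Phi Q c \<pi> m e = ln (\<Sum>q\<in>Q. c q * exp (\<beta> * hs \<pi> m q e))"

definition good :: "'q set \<Rightarrow> ('q \<Rightarrow> real) \<Rightarrow> ('q \<Rightarrow> nat \<Rightarrow> 's) \<Rightarrow> nat \<Rightarrow> 's set \<Rightarrow> bool" where
  "good Q c \<pi> m S \<longleftrightarrow> finite Q \<and> finite S \<and> (\<forall>q\<in>Q. 0 \<le> c q) \<and> (\<exists>q\<in>Q. 0 < c q)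
     \<and> (\<forall>q\<in>Q. \<forall>j\<in>{1..m}. \<pi> q j \<in> S)"

definition TT :: "nat \<Rightarrow> 's set \<Rightarrow> (nat \<times> 's \<Rightarrow> real) \<Rightarrow> real" where
  "TT m S e = (\<Sum>i\<in>{1..m} \<times> S. \<bar>e i\<bar>)"

lemma hs_meas:
  assumes "\<forall>j\<in>{1..m}. \<pi> q j \<in> S"
  shows "hs \<pi> m q \<in> borel_measurable (PiM ({1..m} \<times> S) (\<lambda>_. \<mu>))"
  unfolding hs_def
  by (intro borel_measurable_sum comp_meas) (use assms in auto)

lemma hs_bound:
  assumes "\<forall>j\<in>{1..m}. \<pi> q j \<in> S" "finite S"
  shows "\<bar>hs \<pi> m q e\<bar> \<le> TT m S e"
proof -
  have "\<bar>hs \<pi> m q e\<bar> \<le> (\<Sum>j=1..m. \<bar>e (j, \<pi> q j)\<bar>)" unfolding hs_def by (rule sum_abs)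
  also have "\<dots> = (\<Sum>i\<in>(\<lambda>j. (j, \<pi> q j)) ` {1..m}. \<bar>e i\<bar>)"
    by (subst sum.reindex) (auto simp: inj_on_def)
  also have "\<dots> \<le> TT m S e" unfolding TT_def
    by (rule sum_mono2) (use assms in auto)
  finally show ?thesis .
qed

lemma TT_int: "finite S \<Longrightarrow> integrable (PiM ({1..m} \<times> S) (\<lambda>_. \<mu>)) (TT m S)"
proof -
  have "integrable (PiM ({1..m} \<times> S) (\<lambda>_. \<mu>)) (\<lambda>e. \<bar>e i\<bar>)" if "i \<in> {1..m} \<times> S" for i
    using comp_int[OF that int_abs] by simp
  then show ?thesis unfolding TT_def by (rule Bochner_Integration.integrable_sum)
qed

lemma Phi_meas:
  assumes "good Q c \<pi> m S"
  shows "Phi Q c \<pi> m \<in> borel_measurable (PiM ({1..m} \<times> S) (\<lambda>_. \<mu>))"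
proof -
  have [measurable]: "q \<in> Q \<Longrightarrow> hs \<pi> m q \<in> borel_measurable (PiM ({1..m} \<times> S) (\<lambda>_. \<mu>))" for q
    using assms by (intro hs_meas) (auto simp: good_def)
  show ?thesis unfolding Phi_def by measurable
qed

lemma Phi_bound:
  assumes "good Q c \<pi> m S"
  shows "\<bar>Phi Q c \<pi> m e\<bar> \<le> \<bar>ln (\<Sum>q\<in>Q. c q)\<bar> + \<beta> * TT m S e"
proof -
  from assms have fin: "finite Q" "finite S" and c0: "\<And>q. q \<in> Q \<Longrightarrow> 0 \<le> c q"
    and pth: "\<And>q. q \<in> Q \<Longrightarrow> \<forall>j\<in>{1..m}. \<pi> q j \<in> S" by (auto simp: good_def)
  from assms obtain q0 where q0: "q0 \<in> Q" "0 < c q0" by (auto simp: good_def)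
  define C where "C = (\<Sum>q\<in>Q. c q)"
  have Cpos: "0 < C" unfolding C_def
    using sum_pos2[of Q q0 c, OF fin(1) q0] c0 by auto
  define T where "T = TT m S e"
  define X where "X = (\<Sum>q\<in>Q. c q * exp (\<beta> * hs \<pi> m q e))"
  have hb: "\<bar>hs \<pi> m q e\<bar> \<le> T" if "q \<in> Q" for q
    unfolding T_def by (rule hs_bound) (use pth[OF that] fin in auto)
  have "X \<le> (\<Sum>q\<in>Q. c q * exp (\<beta> * T))" unfolding X_def
  proof (rule sum_mono)
    fix q assume q: "q \<in> Q"
    have "\<beta> * hs \<pi> m q e \<le> \<beta> * T" using hb[OF q] beta_pos by (intro mult_left_mono) auto
    then show "c q * exp (\<beta> * hs \<pi> m q e) \<le> c q * exp (\<beta> * T)"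
      using c0[OF q] by (intro mult_left_mono) auto
  qed
  also have "\<dots> = C * exp (\<beta> * T)" by (simp add: C_def sum_distrib_right)
  finally have Xu: "X \<le> C * exp (\<beta> * T)" .
  have "C * exp (- \<beta> * T) = (\<Sum>q\<in>Q. c q * exp (- \<beta> * T))" by (simp add: C_def sum_distrib_right)
  also have "\<dots> \<le> X" unfolding X_def
  proof (rule sum_mono)
    fix q assume q: "q \<in> Q"
    have "- T \<le> hs \<pi> m q e" using hb[OF q] by linarith
    then have "\<beta> * (- T) \<le> \<beta> * hs \<pi> m q e" using beta_pos by (intro mult_left_mono) auto
    then have "- \<beta> * T \<le> \<beta> * hs \<pi> m q e" by simp
    then show "c q * exp (- \<beta> * T) \<le> c q * exp (\<beta> * hs \<pi> m q e)"
      using c0[OF q] by (intro mult_left_mono) auto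
  qed
  finally have Xl: "C * exp (- \<beta> * T) \<le> X" .
  have "0 < C * exp (- \<beta> * T)" using Cpos by simp
  then have Xpos: "0 < X" using Xl by linarith
  have "ln X \<le> ln (C * exp (\<beta> * T))" using Xu Xpos by simp
  also have "\<dots> = ln C + \<beta> * T" using Cpos by (simp add: ln_mult)
  finally have u: "ln X \<le> ln C + \<beta> * T" .
  have "ln C - \<beta> * T = ln (C * exp (- \<beta> * T))" using Cpos by (simp add: ln_mult)
  also have "\<dots> \<le> ln X" using Xl Cpos by (intro ln_mono) auto
  finally have l: "ln C - \<beta> * T \<le> ln X" .
  show ?thesis unfolding Phi_def X_def[symmetric] C_def[symmetric] T_def[symmetric]
    using u l by linarith
qed

lemma Phi_int:
  assumes "good Q c \<pi> m S"
  shows "integrable (PiM ({1..m} \<times> S) (\<lambda>_. \<mu>)) (Phi Q c \<pi> m)"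
proof (rule Bochner_Integration.integrable_bound)
  show "integrable (PiM ({1..m} \<times> S) (\<lambda>_. \<mu>)) (\<lambda>e. \<bar>ln (\<Sum>q\<in>Q. c q)\<bar> + \<beta> * TT m S e)"
    using assms by (intro Bochner_Integration.integrable_add finite_measure.integrable_const[OF fin_PM]
        integrable_mult_right TT_int) (auto simp: good_def)
  show "Phi Q c \<pi> m \<in> borel_measurable (PiM ({1..m} \<times> S) (\<lambda>_. \<mu>))" by (rule Phi_meas[OF assms])
  show "AE e in PiM ({1..m} \<times> S) (\<lambda>_. \<mu>). norm (Phi Q c \<pi> m e) \<le> norm (\<bar>ln (\<Sum>q\<in>Q. c q)\<bar> + \<beta> * TT m S e)"
  proof (intro AE_I2)
    fix e
    have "0 \<le> TT m S e" unfolding TT_def by (auto intro: sum_nonneg)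
    then show "norm (Phi Q c \<pi> m e) \<le> norm (\<bar>ln (\<Sum>q\<in>Q. c q)\<bar> + \<beta> * TT m S e)"
      using Phi_bound[OF assms, of e] beta_pos by simp
  qed
qed

end


context polymer begin

lemma PSF: "product_sigma_finite (\<lambda>_::'i. \<mu>)"
  unfolding product_sigma_finite_def by (auto intro: sigma_finite_measure_axioms)

lemma idx_union: "{Suc m} \<times> S \<union> {1..m} \<times> S = {1..Suc m} \<times> (S::'s set)" by auto
lemma idx_disj: "{Suc m} \<times> S \<inter> {1..m} \<times> S = {}" by auto

lemma fold_nn:
  assumes "finite S" "f \<in> borel_measurable (PiM ({1..Suc m} \<times> S) (\<lambda>_. \<mu>))"
  shows "(\<integral>\<^sup>+e. f e \<partial>PiM ({1..Suc m} \<times> S) (\<lambda>_. \<mu>)) =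
    (\<integral>\<^sup>+y. (\<integral>\<^sup>+x. f (merge ({Suc m} \<times> S) ({1..m} \<times> S) (y, x)) \<partial>PiM ({1..m} \<times> S) (\<lambda>_. \<mu>)) \<partial>PiM ({Suc m} \<times> S) (\<lambda>_. \<mu>))"
  apply (subst (1) idx_union[symmetric])
  apply (rule product_sigma_finite.product_nn_integral_fold[OF PSF idx_disj])
  using assms by (auto simp only: idx_union)

lemma fold_int:
  fixes f :: "(nat \<times> 's \<Rightarrow> real) \<Rightarrow> real"
  assumes "finite S" "integrable (PiM ({1..Suc m} \<times> S) (\<lambda>_. \<mu>)) f"
  shows "(\<integral>e. f e \<partial>PiM ({1..Suc m} \<times> S) (\<lambda>_. \<mu>)) =
    (\<integral>y. (\<integral>x. f (merge ({Suc m} \<times> S) ({1..m} \<times> S) (y, x)) \<partial>PiM ({1..m} \<times> S) (\<lambda>_. \<mu>)) \<partial>PiM ({Suc m} \<times> S) (\<lambda>_. \<mu>))"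
  apply (subst (1) idx_union[symmetric])
  apply (rule product_sigma_finite.product_integral_fold[OF PSF idx_disj])
  using assms by (auto simp only: idx_union)

lemma fold_integrable:
  fixes f :: "(nat \<times> 's \<Rightarrow> real) \<Rightarrow> real"
  assumes fin: "finite S" and f: "integrable (PiM ({1..Suc m} \<times> S) (\<lambda>_. \<mu>)) f"
  shows "integrable (PiM ({Suc m} \<times> S) (\<lambda>_. \<mu>))
    (\<lambda>y. \<integral>x. f (merge ({Suc m} \<times> S) ({1..m} \<times> S) (y, x)) \<partial>PiM ({1..m} \<times> S) (\<lambda>_. \<mu>))"
proof -
  let ?I = "{Suc m} \<times> S" and ?J = "{1..m} \<times> S"
  interpret PS: product_sigma_finite "\<lambda>_::nat\<times>'s. \<mu>" by (rule PSF)
  interpret I: finite_product_sigma_finite "\<lambda>_::nat\<times>'s. \<mu>" ?I by standard (use fin in auto)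
  interpret J: finite_product_sigma_finite "\<lambda>_::nat\<times>'s. \<mu>" ?J by standard (use fin in auto)
  interpret P: pair_sigma_finite "PiM ?I (\<lambda>_. \<mu>)" "PiM ?J (\<lambda>_. \<mu>)" ..
  have d: "distr (PiM ?I (\<lambda>_. \<mu>) \<Otimes>\<^sub>M PiM ?J (\<lambda>_. \<mu>)) (PiM (?I \<union> ?J) (\<lambda>_. \<mu>)) (merge ?I ?J) = PiM (?I \<union> ?J) (\<lambda>_. \<mu>)"
    by (rule PS.distr_merge[OF idx_disj]) (use fin in auto)
  have fb: "f \<in> borel_measurable (PiM (?I \<union> ?J) (\<lambda>_. \<mu>))" using f unfolding idx_union by auto
  have "integrable (PiM ?I (\<lambda>_. \<mu>) \<Otimes>\<^sub>M PiM ?J (\<lambda>_. \<mu>)) (\<lambda>p. f (merge ?I ?J p))"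
    by (rule integrable_distr[OF measurable_merge]) (use d f in \<open>simp only: idx_union\<close>)
  from P.integrable_fst'[OF this] show ?thesis by simp
qed

lemma hs_merge:
  assumes "\<forall>j\<in>{1..Suc m}. \<pi> q j \<in> S"
  shows "hs \<pi> (Suc m) q (merge ({Suc m} \<times> S) ({1..m} \<times> S) (y, x)) = hs \<pi> m q x + y (Suc m, \<pi> q (Suc m))"
proof -
  have "(\<Sum>j=1..m. merge ({Suc m} \<times> S) ({1..m} \<times> S) (y, x) (j, \<pi> q j)) = (\<Sum>j=1..m. x (j, \<pi> q j))"
    by (rule sum.cong) (use assms in \<open>auto simp: merge_def\<close>)
  moreover have "merge ({Suc m} \<times> S) ({1..m} \<times> S) (y, x) (Suc m, \<pi> q (Suc m)) = y (Suc m, \<pi> q (Suc m))"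
    using assms by (auto simp: merge_def)
  ultimately show ?thesis unfolding hs_def by simp
qed

definition shiftc :: "('q \<Rightarrow> real) \<Rightarrow> ('q \<Rightarrow> nat \<Rightarrow> 's) \<Rightarrow> nat \<Rightarrow> (nat \<times> 's \<Rightarrow> real) \<Rightarrow> 'q \<Rightarrow> real" where
  "shiftc c \<pi> m y q = c q * exp (\<beta> * y (Suc m, \<pi> q (Suc m)))"

lemma Phi_merge:
  assumes "good Q c \<pi> (Suc m) S"
  shows "Phi Q c \<pi> (Suc m) (merge ({Suc m} \<times> S) ({1..m} \<times> S) (y, x)) = Phi Q (shiftc c \<pi> m y) \<pi> m x"
  unfolding Phi_def shiftc_def
proof (rule arg_cong[where f=ln], rule sum.cong[OF refl])
  fix q assume q: "q \<in> Q"
  then have "\<forall>j\<in>{1..Suc m}. \<pi> q j \<in> S" using assms by (auto simp: good_def)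
  from hs_merge[where \<pi>=\<pi> and m=m and q=q and S=S, OF this] show "c q * exp (\<beta> * hs \<pi> (Suc m) q (merge ({Suc m} \<times> S) ({1..m} \<times> S) (y, x))) =
    c q * exp (\<beta> * y (Suc m, \<pi> q (Suc m))) * exp (\<beta> * hs \<pi> m q x)"
    by (simp add: distrib_left exp_add mult_ac)
qed

lemma good_shift: "good Q c \<pi> (Suc m) S \<Longrightarrow> good Q (shiftc c \<pi> m y) \<pi> m S"
  unfolding good_def shiftc_def by (auto, metis exp_gt_zero mult_pos_pos)

lemma good_scale: "good Q c \<pi> m S \<Longrightarrow> 0 < a \<Longrightarrow> good Q (\<lambda>q. c q * a) \<pi> m S"
  unfolding good_def by (auto intro: mult_pos_pos)

lemma good_pred: "good Q c \<pi> (Suc m) S \<Longrightarrow> good Q c \<pi> m S"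
  unfolding good_def by auto

lemma comp_integral: fixes g :: "real \<Rightarrow> real"
  assumes "i \<in> I" "g \<in> borel_measurable borel"
  shows "(\<integral>e. g (e i) \<partial>PiM I (\<lambda>_. \<mu>)) = (\<integral>v. g v \<partial>\<mu>)"
proof -
  have "(\<integral>v. g v \<partial>\<mu>) = (\<integral>v. g v \<partial>distr (PiM I (\<lambda>_. \<mu>)) \<mu> (\<lambda>e. e i))"
    using distr_comp[OF assms(1)] by simp
  also have "\<dots> = (\<integral>e. g (e i) \<partial>PiM I (\<lambda>_. \<mu>))"
    by (rule integral_distr) (use assms meas_mu measurable_component_singleton in auto)
  finally show ?thesis ..
qed

end


context polymer begin

lemma one_step:
  assumes g: "good Q c \<pi> (Suc m) S"
  defines "R \<equiv> PiM ({Suc m} \<times> S) (\<lambda>_. \<mu>)" and "E \<equiv> PiM ({1..m} \<times> S) (\<lambda>_. \<mu>)"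
  defines "A \<equiv> \<lambda>y. \<integral>x. Phi Q (shiftc c \<pi> m y) \<pi> m x \<partial>E"
  shows "integrable R A"
    and "(\<integral>\<^sup>+y. exp (A y - integral\<^sup>L R A) \<partial>R) + (\<integral>\<^sup>+y. exp (- (A y - integral\<^sup>L R A)) \<partial>R)
           \<le> ennreal (2 * L * L')"
proof -
  from g have finQ: "finite Q" and finS: "finite S" and c0: "\<And>q. q \<in> Q \<Longrightarrow> 0 \<le> c q"
    and pth: "\<And>q j. q \<in> Q \<Longrightarrow> j \<in> {1..Suc m} \<Longrightarrow> \<pi> q j \<in> S" by (auto simp: good_def)
  from g obtain q0 where q0: "q0 \<in> Q" "0 < c q0" by (auto simp: good_def)
  have gm: "good Q c \<pi> m S" using g by (rule good_pred)
  interpret R: prob_space R unfolding R_def by (rule prob_PM)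
  interpret E: prob_space E unfolding E_def by (rule prob_PM)
  have Aeq: "A = (\<lambda>y. \<integral>x. Phi Q c \<pi> (Suc m) (merge ({Suc m} \<times> S) ({1..m} \<times> S) (y, x)) \<partial>E)"
    by (simp only: A_def Phi_merge[OF g])
  show intA: "integrable R A"
    unfolding Aeq R_def E_def by (rule fold_integrable[OF finS Phi_int[OF g]])

  define W where "W q x = exp (\<beta> * hs \<pi> m q x)" for q x
  define D where "D x = (\<Sum>q\<in>Q. c q * W q x)" for x
  define u where "u q y = exp (\<beta> * y (Suc m, \<pi> q (Suc m)))" for q y
  define \<alpha> where "\<alpha> q x = c q * W q x / D x" for q x
  have Dpos: "0 < D x" for x
    unfolding D_def W_def using sum_pos2[of Q q0 "\<lambda>q. c q * exp (\<beta> * hs \<pi> m q x)", OF finQ q0(1)] q0 c0 by auto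
  have \<alpha>0: "q \<in> Q \<Longrightarrow> 0 \<le> \<alpha> q x" for q x
    unfolding \<alpha>_def W_def using c0 Dpos[of x] by auto
  have \<alpha>1: "(\<Sum>q\<in>Q. \<alpha> q x) = 1" for x
    unfolding \<alpha>_def using Dpos[of x] by (simp add: sum_divide_distrib[symmetric] D_def)
  have upos: "0 < u q y" for q y unfolding u_def by simp
  define Y where "Y y x = (\<Sum>q\<in>Q. c q * W q x * u q y)" for y x
  have Ypos: "0 < Y y x" for y x
  proof -
    have "\<And>i. i \<in> Q \<Longrightarrow> 0 \<le> c i * W i x * u i y"
      by (metis c0 W_def exp_gt_zero less_imp_le mult_nonneg_nonneg upos)
    moreover have "0 < c q0 * W q0 x * u q0 y" using q0 upos by (simp add: W_def)
    ultimately show ?thesis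
      unfolding Y_def using sum_pos2[of Q q0 "\<lambda>q. c q * W q x * u q y", OF finQ q0(1)] by auto
  qed
  have PhiY: "Phi Q (shiftc c \<pi> m y) \<pi> m x = ln (Y y x)" for y x
    unfolding Phi_def Y_def shiftc_def W_def u_def by (simp add: mult_ac)
  define lnYh where "lnYh = Phi Q (\<lambda>q. c q * L) \<pi> m"
  have lnYh_eq: "lnYh x = ln L + ln (D x)" for x
  proof -
    have "lnYh x = ln (L * D x)"
      unfolding lnYh_def Phi_def D_def W_def by (simp add: sum_distrib_left mult_ac)
    then show ?thesis using L_pos Dpos[of x] by (simp add: ln_mult)
  qed
  have int_lnYh: "integrable E lnYh"
    unfolding lnYh_def E_def by (rule Phi_int[OF good_scale[OF gm L_pos]])
  have int_Py: "integrable E (Phi Q (shiftc c \<pi> m y) \<pi> m)" for y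
    unfolding E_def by (rule Phi_int[OF good_shift[OF g]])
  define Z where "Z y x = Phi Q (shiftc c \<pi> m y) \<pi> m x - lnYh x" for y x
  have int_Z: "integrable E (Z y)" for y
    unfolding Z_def[abs_def] using int_Py int_lnYh by auto
  define C0 where "C0 = (\<integral>x. lnYh x \<partial>E)"
  define B where "B y = (\<integral>x. Z y x \<partial>E)" for y
  have B_eq: "B y = A y - C0" for y
    unfolding B_def A_def C0_def Z_def using int_Py int_lnYh by simp
  have int_B: "integrable R B"
    unfolding B_eq[abs_def] using intA by auto
  have AB: "A y - integral\<^sup>L R A = B y - integral\<^sup>L R B" for y
  proof -
    have "integral\<^sup>L R B = integral\<^sup>L R A - C0"
      unfolding B_eq[abs_def] using intA by (simp add: R.prob_space)
    then show ?thesis using B_eq[of y] by simp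
  qed

  have expZ: "exp (Z y x) = (\<Sum>q\<in>Q. \<alpha> q x * u q y) / L" for y x
  proof -
    have "exp (Z y x) = Y y x / (L * D x)"
      unfolding Z_def PhiY lnYh_eq using Ypos[of y x] L_pos Dpos[of x]
      by (simp add: exp_diff exp_add)
    also have "\<dots> = (\<Sum>q\<in>Q. \<alpha> q x * u q y) / L"
      unfolding Y_def \<alpha>_def using L_pos Dpos[of x]
      by (simp add: sum_divide_distrib field_simps)
    finally show ?thesis .
  qed
  have expmZ: "exp (- Z y x) \<le> L * (\<Sum>q\<in>Q. \<alpha> q x * inverse (u q y))" for y x
  proof -
    have s: "(\<Sum>q\<in>Q. \<alpha> q x * u q y) = Y y x / D x"
      unfolding Y_def \<alpha>_def using Dpos[of x] by (simp add: sum_divide_distrib)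
    have "exp (- Z y x) = L * inverse (\<Sum>q\<in>Q. \<alpha> q x * u q y)"
      unfolding s Z_def PhiY lnYh_eq using Ypos[of y x] L_pos Dpos[of x]
      by (simp add: exp_diff exp_minus exp_add field_simps)
    also have "\<dots> \<le> L * (\<Sum>q\<in>Q. \<alpha> q x * inverse (u q y))"
      using L_pos by (intro mult_left_mono am_hm[OF finQ \<alpha>0 \<alpha>1 upos]) auto
    finally show ?thesis .
  qed

  have iq: "(Suc m, \<pi> q (Suc m)) \<in> {Suc m} \<times> S" if "q \<in> Q" for q using pth[OF that] by auto
  have u_int: "integrable R (u q)" if "q \<in> Q" for q
    using comp_int[OF iq[OF that] int_exp_pos] unfolding R_def u_def[abs_def] by simp
  have u_L: "(\<integral>y. u q y \<partial>R) = L" if "q \<in> Q" for q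
    using comp_integral[OF iq[OF that], of "\<lambda>v. exp (\<beta> * v)"] unfolding R_def u_def L_def by simp
  have ui_eq: "inverse (u q y) = exp (- \<beta> * y (Suc m, \<pi> q (Suc m)))" for q y
    by (simp add: u_def exp_minus)
  have ui_int: "integrable R (\<lambda>y. inverse (u q y))" if "q \<in> Q" for q
    using comp_int[OF iq[OF that] int_exp_neg] unfolding R_def ui_eq by simp
  have ui_L: "(\<integral>y. inverse (u q y) \<partial>R) = L'" if "q \<in> Q" for q
    using comp_integral[OF iq[OF that], of "\<lambda>v. exp (- \<beta> * v)"] unfolding R_def ui_eq L'_def by simp
  define G where "G y x = (\<Sum>q\<in>Q. \<alpha> q x * u q y) / L" for y x
  define H where "H y x = L * (\<Sum>q\<in>Q. \<alpha> q x * inverse (u q y))" for y x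
  have G0: "0 \<le> G y x" for y x
    unfolding G_def using L_pos \<alpha>0 less_imp_le[OF upos]
    by (intro divide_nonneg_pos sum_nonneg mult_nonneg_nonneg) auto
  have H0: "0 \<le> H y x" for y x
    unfolding H_def using L_pos \<alpha>0 less_imp_le[OF upos]
    by (intro sum_nonneg mult_nonneg_nonneg) auto
  have G_int: "integrable R (\<lambda>y. G y x)" for x
    unfolding G_def using u_int by auto
  have H_int: "integrable R (\<lambda>y. H y x)" for x
    unfolding H_def using ui_int by auto
  have G_I: "(\<integral>y. G y x \<partial>R) = 1" for x
  proof -
    have "(\<integral>y. G y x \<partial>R) = (\<Sum>q\<in>Q. \<alpha> q x * (\<integral>y. u q y \<partial>R)) / L"
      unfolding G_def using u_int by (simp add: integral_sum)
    also have "\<dots> = (\<Sum>q\<in>Q. \<alpha> q x) * L / L" using u_L by (simp add: sum_distrib_right)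
    also have "\<dots> = 1" using \<alpha>1 L_pos by simp
    finally show ?thesis .
  qed
  have H_I: "(\<integral>y. H y x \<partial>R) = L * L'" for x
  proof -
    have "(\<integral>y. H y x \<partial>R) = L * (\<Sum>q\<in>Q. \<alpha> q x * (\<integral>y. inverse (u q y) \<partial>R))"
      unfolding H_def using ui_int by (simp add: integral_sum)
    also have "\<dots> = L * ((\<Sum>q\<in>Q. \<alpha> q x) * L')" using ui_L by (simp add: sum_distrib_right)
    also have "\<dots> = L * L'" using \<alpha>1 by simp
    finally show ?thesis .
  qed
  have G_N: "(\<integral>\<^sup>+y. G y x \<partial>R) = 1" for x
    using nn_integral_eq_integral[OF G_int] G0 G_I by simp
  have H_N: "(\<integral>\<^sup>+y. H y x \<partial>R) = ennreal (L * L')" for x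
    using nn_integral_eq_integral[OF H_int] H0 H_I by simp

  interpret P: pair_sigma_finite E R ..
  have mhs[measurable]: "(\<lambda>x. hs \<pi> m q x) \<in> borel_measurable E" if "q \<in> Q" for q
    unfolding E_def by (rule hs_meas) (use pth[OF that] in auto)
  have mco[measurable]: "(\<lambda>y. y (Suc m, \<pi> q (Suc m))) \<in> borel_measurable R" if "q \<in> Q" for q
    unfolding R_def by (rule comp_meas[OF iq[OF that]])
  have Gm: "(\<lambda>(x, y). ennreal (G y x)) \<in> borel_measurable (E \<Otimes>\<^sub>M R)"
    unfolding G_def \<alpha>_def D_def W_def u_def by measurable
  have Hm: "(\<lambda>(x, y). ennreal (H y x)) \<in> borel_measurable (E \<Otimes>\<^sub>M R)"
    unfolding H_def \<alpha>_def D_def W_def u_def by measurable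
  have P1: "(\<integral>\<^sup>+y. (\<integral>\<^sup>+x. exp (Z y x) \<partial>E) \<partial>R) = 1"
  proof -
    have "(\<integral>\<^sup>+y. (\<integral>\<^sup>+x. exp (Z y x) \<partial>E) \<partial>R) = (\<integral>\<^sup>+y. (\<integral>\<^sup>+x. G y x \<partial>E) \<partial>R)"
      by (simp add: expZ G_def)
    also have "\<dots> = (\<integral>\<^sup>+x. (\<integral>\<^sup>+y. G y x \<partial>R) \<partial>E)"
      using P.Fubini'[OF Gm] by simp
    also have "\<dots> = 1" by (simp add: G_N E.emeasure_space_1)
    finally show ?thesis .
  qed
  have P2: "(\<integral>\<^sup>+y. (\<integral>\<^sup>+x. exp (- Z y x) \<partial>E) \<partial>R) \<le> ennreal (L * L')"
  proof -
    have "(\<integral>\<^sup>+y. (\<integral>\<^sup>+x. exp (- Z y x) \<partial>E) \<partial>R) \<le> (\<integral>\<^sup>+y. (\<integral>\<^sup>+x. H y x \<partial>E) \<partial>R)"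
      by (intro nn_integral_mono ennreal_leI) (simp add: expmZ H_def)
    also have "\<dots> = (\<integral>\<^sup>+x. (\<integral>\<^sup>+y. H y x \<partial>R) \<partial>E)"
      using P.Fubini'[OF Hm] by simp
    also have "\<dots> = ennreal (L * L')" by (simp add: H_N E.emeasure_space_1)
    finally show ?thesis .
  qed

  have J1: "ennreal (exp (B y)) \<le> (\<integral>\<^sup>+x. exp (Z y x) \<partial>E)" for y
    unfolding B_def by (rule jensen_exp[OF E.prob_space_axioms int_Z])
  have J2: "ennreal (exp (- B y)) \<le> (\<integral>\<^sup>+x. exp (- Z y x) \<partial>E)" for y
    using jensen_exp[OF E.prob_space_axioms integrable_minus[OF int_Z[of y]]] unfolding B_def by simp
  have Bm[measurable]: "B \<in> borel_measurable R" using int_B by auto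
  define X1 where "X1 = (\<integral>\<^sup>+y. exp (B y) \<partial>R)"
  define X2 where "X2 = (\<integral>\<^sup>+y. exp (- B y) \<partial>R)"
  have X1b: "X1 \<le> 1"
    unfolding X1_def P1[symmetric] by (intro nn_integral_mono J1)
  have X2b: "X2 \<le> ennreal (L * L')"
    unfolding X2_def by (rule order.trans[OF nn_integral_mono[OF J2] P2])
  have J3: "ennreal (exp (integral\<^sup>L R B)) \<le> X1"
    unfolding X1_def by (rule jensen_exp[OF R.prob_space_axioms int_B])
  have J4: "ennreal (exp (- integral\<^sup>L R B)) \<le> X2"
    using jensen_exp[OF R.prob_space_axioms integrable_minus[OF int_B]] unfolding X2_def by simp
  have T1: "(\<integral>\<^sup>+y. exp (A y - integral\<^sup>L R A) \<partial>R) \<le> ennreal (L * L')"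
  proof -
    have "(\<integral>\<^sup>+y. exp (A y - integral\<^sup>L R A) \<partial>R) = (\<integral>\<^sup>+y. ennreal (exp (B y)) * ennreal (exp (- integral\<^sup>L R B)) \<partial>R)"
      by (intro nn_integral_cong) (simp add: AB exp_diff ennreal_mult[symmetric] divide_inverse exp_minus)
    also have "\<dots> = X1 * ennreal (exp (- integral\<^sup>L R B))"
      unfolding X1_def by (rule nn_integral_multc) measurable
    also have "\<dots> \<le> 1 * ennreal (L * L')"
      by (rule mult_mono[OF X1b order.trans[OF J4 X2b]]) auto
    finally show ?thesis by simp
  qed
  have T2: "(\<integral>\<^sup>+y. exp (- (A y - integral\<^sup>L R A)) \<partial>R) \<le> ennreal (L * L')"
  proof -
    have "(\<integral>\<^sup>+y. exp (- (A y - integral\<^sup>L R A)) \<partial>R) = (\<integral>\<^sup>+y. ennreal (exp (- B y)) * ennreal (exp (integral\<^sup>L R B)) \<partial>R)"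
      by (intro nn_integral_cong) (simp add: AB exp_diff ennreal_mult[symmetric] divide_inverse exp_minus)
    also have "\<dots> = X2 * ennreal (exp (integral\<^sup>L R B))"
      unfolding X2_def by (rule nn_integral_multc) measurable
    also have "\<dots> \<le> ennreal (L * L') * 1"
      by (rule mult_mono[OF X2b order.trans[OF J3 X1b]]) auto
    finally show ?thesis by simp
  qed
  have "ennreal (L * L') + ennreal (L * L') = ennreal (2 * L * L')"
    using L_pos L'_pos by (simp add: ennreal_plus[symmetric] del: ennreal_plus)
  with add_mono[OF T1 T2] show "(\<integral>\<^sup>+y. exp (A y - integral\<^sup>L R A) \<partial>R) + (\<integral>\<^sup>+y. exp (- (A y - integral\<^sup>L R A)) \<partial>R)
           \<le> ennreal (2 * L * L')" by simp
qed

end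


context polymer begin

lemma main_bound:
  assumes "good Q c \<pi> m S" and t: "0 \<le> t" "t \<le> 1" and \<sigma>: "\<sigma> \<in> {1, -1}"
  shows "(\<integral>\<^sup>+e. exp (\<sigma> * t * (Phi Q c \<pi> m e - (\<integral>e'. Phi Q c \<pi> m e' \<partial>PiM ({1..m} \<times> S) (\<lambda>_. \<mu>))))
            \<partial>PiM ({1..m} \<times> S) (\<lambda>_. \<mu>)) \<le> ennreal (exp (real m * (2 * L * L') * t^2))"
  using assms(1)
proof (induction m arbitrary: c)
  case 0
  interpret E: prob_space "PiM {} (\<lambda>_::nat\<times>'s. \<mu>)" by (rule prob_PM)
  have "Phi Q c \<pi> 0 e = ln (\<Sum>q\<in>Q. c q)" for e by (simp add: Phi_def hs_def)
  then show ?case by (simp add: E.emeasure_space_1 E.prob_space)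
next
  case (Suc m)
  note g = Suc.prems
  have finS: "finite S" using g by (simp add: good_def)
  define R where "R = PiM ({Suc m} \<times> S) (\<lambda>_. \<mu>)"
  define E where "E = PiM ({1..m} \<times> S) (\<lambda>_. \<mu>)"
  define Ef where "Ef = PiM ({1..Suc m} \<times> S) (\<lambda>_. \<mu>)"
  define A where "A y = (\<integral>x. Phi Q (shiftc c \<pi> m y) \<pi> m x \<partial>E)" for y
  define K where "K = 2 * L * L'"
  interpret R: prob_space R unfolding R_def by (rule prob_PM)
  have intA: "integrable R A" and bnd: "(\<integral>\<^sup>+y. exp (A y - integral\<^sup>L R A) \<partial>R) + (\<integral>\<^sup>+y. exp (- (A y - integral\<^sup>L R A)) \<partial>R)
           \<le> ennreal K"
    using one_step[OF g] unfolding R_def E_def A_def[abs_def] K_def by auto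
  have Am[measurable]: "A \<in> borel_measurable R" using intA by auto
  have EF: "(\<integral>e. Phi Q c \<pi> (Suc m) e \<partial>Ef) = integral\<^sup>L R A"
    unfolding Ef_def R_def A_def E_def
    by (simp only: fold_int[OF finS Phi_int[OF g]] Phi_merge[OF g])
  have Pm[measurable]: "Phi Q c \<pi> (Suc m) \<in> borel_measurable Ef"
    unfolding Ef_def by (rule Phi_meas[OF g])
  have Pym[measurable]: "Phi Q (shiftc c \<pi> m y) \<pi> m \<in> borel_measurable E" for y
    unfolding E_def by (rule Phi_meas[OF good_shift[OF g]])
  have "(\<integral>\<^sup>+e. exp (\<sigma> * t * (Phi Q c \<pi> (Suc m) e - (\<integral>e'. Phi Q c \<pi> (Suc m) e' \<partial>Ef))) \<partial>Ef)
      = (\<integral>\<^sup>+y. (\<integral>\<^sup>+x. exp (\<sigma> * t * (Phi Q c \<pi> (Suc m) (merge ({Suc m} \<times> S) ({1..m} \<times> S) (y, x)) - integral\<^sup>L R A)) \<partial>E) \<partial>R)"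
    unfolding EF unfolding Ef_def R_def E_def by (rule fold_nn[OF finS]) (unfold Ef_def[symmetric], measurable)
  also have "\<dots> = (\<integral>\<^sup>+y. (\<integral>\<^sup>+x. exp (\<sigma> * t * (Phi Q (shiftc c \<pi> m y) \<pi> m x - A y)) \<partial>E) * ennreal (exp (\<sigma> * t * (A y - integral\<^sup>L R A))) \<partial>R)"
  proof (intro nn_integral_cong)
    fix y
    have PM': "Phi Q c \<pi> (Suc m) (merge ({Suc m} \<times> S) ({Suc 0..m} \<times> S) (y, x)) = Phi Q (shiftc c \<pi> m y) \<pi> m x" for x
      using Phi_merge[OF g, of y x] by simp
    have "(\<integral>\<^sup>+x. exp (\<sigma> * t * (Phi Q c \<pi> (Suc m) (merge ({Suc m} \<times> S) ({1..m} \<times> S) (y, x)) - integral\<^sup>L R A)) \<partial>E)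
        = (\<integral>\<^sup>+x. exp (\<sigma> * t * (Phi Q (shiftc c \<pi> m y) \<pi> m x - A y)) * ennreal (exp (\<sigma> * t * (A y - integral\<^sup>L R A))) \<partial>E)"
      by (intro nn_integral_cong) (simp add: PM' ennreal_mult[symmetric] exp_add[symmetric] algebra_simps)
    also have "\<dots> = (\<integral>\<^sup>+x. exp (\<sigma> * t * (Phi Q (shiftc c \<pi> m y) \<pi> m x - A y)) \<partial>E) * ennreal (exp (\<sigma> * t * (A y - integral\<^sup>L R A)))"
      by (rule nn_integral_multc) measurable
    finally show "(\<integral>\<^sup>+x. exp (\<sigma> * t * (Phi Q c \<pi> (Suc m) (merge ({Suc m} \<times> S) ({1..m} \<times> S) (y, x)) - integral\<^sup>L R A)) \<partial>E)
        = (\<integral>\<^sup>+x. exp (\<sigma> * t * (Phi Q (shiftc c \<pi> m y) \<pi> m x - A y)) \<partial>E) * ennreal (exp (\<sigma> * t * (A y - integral\<^sup>L R A)))" .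
  qed
  also have "\<dots> \<le> (\<integral>\<^sup>+y. ennreal (exp (real m * K * t^2)) * ennreal (exp (\<sigma> * t * (A y - integral\<^sup>L R A))) \<partial>R)"
  proof (intro nn_integral_mono mult_right_mono)
    fix y
    show "(\<integral>\<^sup>+x. exp (\<sigma> * t * (Phi Q (shiftc c \<pi> m y) \<pi> m x - A y)) \<partial>E) \<le> ennreal (exp (real m * K * t^2))"
      using Suc.IH[OF good_shift[OF g, of y]] unfolding A_def E_def K_def .
  qed auto
  also have "\<dots> = ennreal (exp (real m * K * t^2)) * (\<integral>\<^sup>+y. exp (\<sigma> * t * (A y - integral\<^sup>L R A)) \<partial>R)"
    by (rule nn_integral_cmult) measurable
  also have "\<dots> \<le> ennreal (exp (real m * K * t^2)) * ennreal (exp (K * t^2))"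
  proof (rule mult_left_mono)
    have K0: "0 \<le> K" unfolding K_def using L_pos L'_pos by simp
    have "(\<integral>y. A y - integral\<^sup>L R A \<partial>R) = 0" using intA by (simp add: R.prob_space)
    from t_lemma[OF R.prob_space_axioms _ this _ K0 t \<sigma>] intA bnd
    show "(\<integral>\<^sup>+y. exp (\<sigma> * t * (A y - integral\<^sup>L R A)) \<partial>R) \<le> ennreal (exp (K * t^2))" by auto
  qed auto
  also have "\<dots> = ennreal (exp (real (Suc m) * K * t^2))"
    by (simp add: ennreal_mult[symmetric] exp_add[symmetric] algebra_simps)
  finally show ?case unfolding Ef_def K_def .
qed

end


lemma chernoff_t:
  assumes P: "prob_space M" and Fm: "F \<in> borel_measurable M" and n: "0 < n"
    and t: "0 < t" "t \<le> 1"
    and ie: "integrable M (\<lambda>\<omega>. exp (\<sigma> * t * F \<omega>))"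
    and eb: "prob_space.expectation M (\<lambda>\<omega>. exp (\<sigma> * t * F \<omega>)) \<le> exp (n * K * t^2)"
  shows "measure M {\<omega> \<in> space M. \<sigma> * (1 / n) * F \<omega> > x} \<le> exp (n * K * t^2 - t * n * x)"
proof -
  interpret prob_space M by fact
  define A where "A = {\<omega> \<in> space M. \<sigma> * (1 / n) * F \<omega> > x}"
  have As: "A \<in> sets M" unfolding A_def using Fm by measurable
  have ind: "indicator A \<omega> \<le> exp (\<sigma> * t * F \<omega>) * exp (- (t * n * x))" for \<omega>
  proof (cases "\<omega> \<in> A")
    case True
    then have "\<sigma> * (1 / n) * F \<omega> > x" by (simp add: A_def)
    then have "\<sigma> * F \<omega> > n * x" using n by (simp add: field_simps)
    then have "t * (n * x) \<le> t * (\<sigma> * F \<omega>)" using t by (intro mult_left_mono) auto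
    then have "1 \<le> exp (\<sigma> * t * F \<omega> - t * n * x)" by (simp add: algebra_simps)
    then show ?thesis using True by (simp add: exp_diff exp_minus divide_inverse)
  next
    case False then show ?thesis by simp
  qed
  have "measure M A = (\<integral>\<omega>. indicator A \<omega> \<partial>M)" using As by simp
  also have "\<dots> \<le> (\<integral>\<omega>. exp (\<sigma> * t * F \<omega>) * exp (- (t * n * x)) \<partial>M)"
  proof (rule integral_mono)
    show "integrable M (indicator A :: _ \<Rightarrow> real)"
      by (rule integrable_real_indicator[OF As]) (simp add: emeasure_eq_measure)
  qed (use ie ind in auto)
  also have "\<dots> = expectation (\<lambda>\<omega>. exp (\<sigma> * t * F \<omega>)) * exp (- (t * n * x))" by simp
  also have "\<dots> \<le> exp (n * K * t^2) * exp (- (t * n * x))" using eb by (intro mult_right_mono) auto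
  also have "\<dots> = exp (n * K * t^2 - t * n * x)" by (simp add: exp_diff exp_minus divide_inverse)
  finally show ?thesis unfolding A_def .
qed

lemma chernoff:
  assumes P: "prob_space M" and Fm: "F \<in> borel_measurable M" and n: "0 < n" and K: "0 < K"
    and tb: "\<forall>t \<in> {0..1::real}. integrable M (\<lambda>\<omega>. exp (\<sigma> * t * F \<omega>)) \<and>
        prob_space.expectation M (\<lambda>\<omega>. exp (\<sigma> * t * F \<omega>)) \<le> exp (n * K * t^2)"
    and x: "0 < x"
  shows "measure M {\<omega> \<in> space M. \<sigma> * (1 / n) * F \<omega> > x}
     \<le> (if x \<le> 2 * K then exp (- (n * x^2) / (4 * K)) else exp (- n * (x - K)))"
proof (cases "x \<le> 2 * K")
  case True
  define t where "t = x / (2 * K)"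
  have t: "0 < t" "t \<le> 1" using True x K by (auto simp: t_def)
  have "measure M {\<omega> \<in> space M. \<sigma> * (1 / n) * F \<omega> > x} \<le> exp (n * K * t^2 - t * n * x)"
    using tb t by (intro chernoff_t[OF P Fm n t]) auto
  also have "n * K * t^2 - t * n * x = - (n * x^2) / (4 * K)"
    using K unfolding t_def by (simp add: field_simps power2_eq_square)
  finally show ?thesis using True by simp
next
  case False
  have "measure M {\<omega> \<in> space M. \<sigma> * (1 / n) * F \<omega> > x} \<le> exp (n * K * 1^2 - 1 * n * x)"
    using tb[rule_format, of 1] by (intro chernoff_t[OF P Fm n]) auto
  also have "n * K * 1^2 - 1 * n * x = - n * (x - K)" by (simp add: algebra_simps)
  finally show ?thesis using False by simp
qed



lemma finite_unit_steps: "finite (unit_steps :: (int^'d::finite) set)"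
proof -
  have "(unit_steps :: (int^'d) set) \<subseteq> (\<lambda>p. axis (fst p) (snd p)) ` (UNIV \<times> {1, -1::int})"
    by (auto simp: unit_steps_def image_iff)
  then show ?thesis by (rule finite_subset) auto
qed

lemma finite_walk_paths: "finite (walk_paths n :: (int^'d::finite) list set)"
proof -
  have "walk_paths n \<subseteq> {xs. set xs \<subseteq> (unit_steps :: (int^'d) set) \<and> length xs = n}"
    by (auto simp: walk_paths_def)
  then show ?thesis by (rule finite_subset) (rule finite_lists_length_eq[OF finite_unit_steps])
qed

theorem theorem1p2:
  fixes M :: "'w measure"
    and \<eta> :: "'w \<Rightarrow> nat \<times> (int^'d::finite) \<Rightarrow> real"
    and f :: "nat \<Rightarrow> real^'d \<Rightarrow> real"
    and \<beta> :: real
  assumes P: "prob_space M"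
    and indep: "prob_space.indep_vars M (\<lambda>_. borel) (\<lambda>i \<omega>. \<eta> \<omega> i) UNIV"
    and ident: "\<And>i. distr M borel (\<lambda>\<omega>. \<eta> \<omega> i) = distr M borel (\<lambda>\<omega>. \<eta> \<omega> (0, 0))"
    and nonconst: "\<not> (\<exists>c. AE \<omega> in M. \<eta> \<omega> (0, 0) = c)"
    and beta_pos: "\<beta> > 0"
    and expmom: "integrable M (\<lambda>\<omega>. exp (\<beta> * \<bar>\<eta> \<omega> (0, 0)\<bar>))"
    and f_bdd: "\<And>n. n \<ge> 1 \<Longrightarrow> \<exists>B. \<forall>x. \<bar>f n x\<bar> \<le> B"
    and f_nonneg: "\<And>n x. n \<ge> 1 \<Longrightarrow> f n x \<ge> 0"
    and f_pos: "\<And>n. n \<ge> 1 \<Longrightarrow>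
                  walkE n (\<lambda>S. if f n (to_real_vec (S n)) > 0 then 1 else 0) \<noteq> 0"
  defines "K \<equiv> 2 * exp (ln (prob_space.expectation M (\<lambda>\<omega>. exp (\<beta> * \<eta> \<omega> (0, 0))))
                      + ln (prob_space.expectation M (\<lambda>\<omega>. exp ((- \<beta>) * \<eta> \<omega> (0, 0)))))"
    and "Y \<equiv> partition_Y \<beta> \<eta> f"
  shows "\<forall>n \<ge> 1. \<forall>\<sigma> \<in> {1, -1::real}.
           integrable M (\<lambda>\<omega>. ln (Y n \<omega>)) \<and>
           (\<forall>t \<in> {0..1::real}.
              integrable M (\<lambda>\<omega>. exp (\<sigma> * t * (ln (Y n \<omega>)
                   - prob_space.expectation M (\<lambda>\<omega>'. ln (Y n \<omega>'))))) \<and>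
              prob_space.expectation M (\<lambda>\<omega>. exp (\<sigma> * t * (ln (Y n \<omega>)
                   - prob_space.expectation M (\<lambda>\<omega>'. ln (Y n \<omega>')))))
                \<le> exp (real n * K * t\<^sup>2)) \<and>
           (\<forall>x > 0.
              measure M {\<omega> \<in> space M. \<sigma> * (1 / real n) * (ln (Y n \<omega>)
                   - prob_space.expectation M (\<lambda>\<omega>'. ln (Y n \<omega>'))) > x}
                \<le> (if x \<le> 2 * K then exp (- (real n * x\<^sup>2) / (4 * K))
                    else exp (- real n * (x - K))))"
proof -
  interpret Mp: prob_space M by (rule P)
  have rv: "(\<lambda>\<omega>. \<eta> \<omega> i) \<in> borel_measurable M" for i
    using indep unfolding Mp.indep_vars_def by blast
  define \<mu> where "\<mu> = distr M borel (\<lambda>\<omega>. \<eta> \<omega> (0, 0))"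
  have mu_prob: "prob_space \<mu>" unfolding \<mu>_def by (rule Mp.prob_space_distr[OF rv])
  have sets_mu: "sets \<mu> = sets borel" by (simp add: \<mu>_def)
  have int_mu: "integrable \<mu> g \<longleftrightarrow> integrable M (\<lambda>\<omega>. g (\<eta> \<omega> (0,0)))" if "g \<in> borel_measurable borel" for g :: "real \<Rightarrow> real"
    unfolding \<mu>_def by (rule integrable_distr_eq[OF rv that])
  have integral_mu: "(\<integral>v. g v \<partial>\<mu>) = (\<integral>\<omega>. g (\<eta> \<omega> (0,0)) \<partial>M)" if "g \<in> borel_measurable borel" for g :: "real \<Rightarrow> real"
    unfolding \<mu>_def by (rule integral_distr[OF rv that])
  interpret PL: polymer \<mu> \<beta>
  proof (unfold polymer_def polymer_axioms_def, intro conjI mu_prob sets_mu beta_pos)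
    show "integrable \<mu> (\<lambda>v. exp (\<beta> * \<bar>v\<bar>))" using int_mu[of "\<lambda>v. exp (\<beta> * \<bar>v\<bar>)"] expmom by simp
  qed
  have L_eq: "prob_space.expectation M (\<lambda>\<omega>. exp (\<beta> * \<eta> \<omega> (0, 0))) = PL.L"
    unfolding PL.L_def by (simp add: integral_mu)
  have L'_eq: "prob_space.expectation M (\<lambda>\<omega>. exp ((- \<beta>) * \<eta> \<omega> (0, 0))) = PL.L'"
    unfolding PL.L'_def by (simp add: integral_mu)
  have K_eq: "K = 2 * PL.L * PL.L'"
    unfolding K_def L_eq L'_eq using PL.L_pos PL.L'_pos by (simp add: exp_add)
  have Kpos: "0 < K" unfolding K_eq using PL.L_pos PL.L'_pos by simp
  show ?thesis
  proof (intro allI impI ballI)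
    fix n :: nat and \<sigma> :: real assume n: "1 \<le> n" and \<sigma>: "\<sigma> \<in> {1, -1}"
    define W where "W = (walk_paths n :: (int^'d) list set)"
    have finW: "finite W" unfolding W_def by (rule finite_walk_paths)
    define S where "S = (\<lambda>p. walk_pos (fst p) (snd p)) ` (W \<times> {1..n})"
    have finS: "finite S" unfolding S_def using finW by auto
    define c where "c xs = f n (to_real_vec (walk_pos xs n)) / real (card W)" for xs
    have good: "PL.good W c walk_pos n S"
    proof -
      have "walkE n (\<lambda>S. if f n (to_real_vec (S n)) > 0 then 1 else 0) \<noteq> 0" using f_pos[OF n] .
      then have ne: "(\<Sum>xs\<in>W. if f n (to_real_vec (walk_pos xs n)) > 0 then 1 else 0 :: real) \<noteq> 0"
        and cW: "real (card W) \<noteq> 0"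
        unfolding walkE_def W_def by auto
      from ne obtain xs where xs: "xs \<in> W" "f n (to_real_vec (walk_pos xs n)) > 0"
        by (metis (mono_tags, lifting) sum.neutral)
      have "0 < c xs" unfolding c_def using xs cW by simp
      moreover have "\<forall>q\<in>W. 0 \<le> c q" unfolding c_def using f_nonneg[OF n] by simp
      moreover have "\<forall>q\<in>W. \<forall>j\<in>{1..n}. walk_pos q j \<in> S" unfolding S_def by force
      ultimately show ?thesis unfolding PL.good_def using finW finS xs(1) by blast
    qed
    define I where "I = {1..n} \<times> S"
    define V where "V \<omega> = (\<lambda>i\<in>I. \<eta> \<omega> i)" for \<omega>
    have lnY: "ln (Y n \<omega>) = PL.Phi W c walk_pos n (V \<omega>)" for \<omega>
    proof -
      have hs: "PL.hs walk_pos n xs (V \<omega>) = (\<Sum>j=1..n. \<eta> \<omega> (j, walk_pos xs j))" if "xs \<in> W" for xs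
        unfolding PL.hs_def V_def I_def S_def using that by (intro sum.cong) force+
      have "Y n \<omega> = (\<Sum>xs\<in>W. c xs * exp (\<beta> * PL.hs walk_pos n xs (V \<omega>)))"
        unfolding Y_def partition_Y_def walkE_def W_def[symmetric] c_def
        by (simp add: hs sum_divide_distrib)
      then show ?thesis unfolding PL.Phi_def by simp
    qed
    have Vm: "V \<in> measurable M (PiM I (\<lambda>_. \<mu>))"
      unfolding V_def by (rule measurable_restrict) (use rv measurable_cong_sets[OF refl sets_mu] in auto)
    have Ine: "I \<noteq> {}"
    proof -
      from good obtain xs where "xs \<in> W" unfolding PL.good_def by auto
      then have "(1, walk_pos xs 1) \<in> I" unfolding I_def S_def using n by force
      then show ?thesis by auto
    qed
    have distrV: "distr M (PiM I (\<lambda>_. \<mu>)) V = PiM I (\<lambda>_. \<mu>)"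
    proof -
      have iv: "Mp.indep_vars (\<lambda>_. borel) (\<lambda>i \<omega>. \<eta> \<omega> i) I" by (rule Mp.indep_vars_subset[OF indep]) auto
      have "distr M (PiM I (\<lambda>_. borel)) (\<lambda>x. \<lambda>i\<in>I. \<eta> x i) = PiM I (\<lambda>i. distr M borel (\<lambda>\<omega>. \<eta> \<omega> i))"
        using Mp.indep_vars_iff_distr_eq_PiM'[OF Ine, where M'="\<lambda>_. borel" and X="\<lambda>i \<omega>. \<eta> \<omega> i"] rv iv by auto
      moreover have "PiM I (\<lambda>i. distr M borel (\<lambda>\<omega>. \<eta> \<omega> i)) = PiM I (\<lambda>_. \<mu>)"
        by (rule PiM_cong[OF refl]) (unfold \<mu>_def, rule ident)
      moreover have "distr M (PiM I (\<lambda>_. borel)) (\<lambda>x. \<lambda>i\<in>I. \<eta> x i) = distr M (PiM I (\<lambda>_. \<mu>)) V"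
        by (intro distr_cong sets_PiM_cong) (auto simp: V_def sets_mu)
      ultimately show ?thesis by simp
    qed
    have Phim: "PL.Phi W c walk_pos n \<in> borel_measurable (PiM I (\<lambda>_. \<mu>))"
      unfolding I_def by (rule PL.Phi_meas[OF good])
    have Phii: "integrable (PiM I (\<lambda>_. \<mu>)) (PL.Phi W c walk_pos n)"
      unfolding I_def by (rule PL.Phi_int[OF good])
    have intlnY: "integrable M (\<lambda>\<omega>. ln (Y n \<omega>))"
      unfolding lnY using integrable_distr_eq[OF Vm Phim] distrV Phii by simp
    have ElnY: "(\<integral>\<omega>. ln (Y n \<omega>) \<partial>M) = (\<integral>e. PL.Phi W c walk_pos n e \<partial>PiM I (\<lambda>_. \<mu>))"
      unfolding lnY using integral_distr[OF Vm Phim] distrV by simp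
    have Fm: "(\<lambda>\<omega>. ln (Y n \<omega>) - (\<integral>\<omega>'. ln (Y n \<omega>') \<partial>M)) \<in> borel_measurable M"
      unfolding lnY using measurable_compose[OF Vm Phim] by simp
    have tb: "\<forall>t\<in>{0..1::real}. integrable M (\<lambda>\<omega>. exp (\<sigma> * t * (ln (Y n \<omega>) - (\<integral>\<omega>'. ln (Y n \<omega>') \<partial>M)))) \<and>
        (\<integral>\<omega>. exp (\<sigma> * t * (ln (Y n \<omega>) - (\<integral>\<omega>'. ln (Y n \<omega>') \<partial>M))) \<partial>M) \<le> exp (real n * K * t\<^sup>2)"
    proof
      fix t :: real assume t: "t \<in> {0..1}"
      have nn: "(\<integral>\<^sup>+\<omega>. exp (\<sigma> * t * (ln (Y n \<omega>) - (\<integral>\<omega>'. ln (Y n \<omega>') \<partial>M))) \<partial>M) \<le> ennreal (exp (real n * K * t\<^sup>2))"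
      proof -
        have "(\<integral>\<^sup>+\<omega>. exp (\<sigma> * t * (ln (Y n \<omega>) - (\<integral>\<omega>'. ln (Y n \<omega>') \<partial>M))) \<partial>M)
          = (\<integral>\<^sup>+\<omega>. exp (\<sigma> * t * (PL.Phi W c walk_pos n (V \<omega>) - (\<integral>e. PL.Phi W c walk_pos n e \<partial>PiM I (\<lambda>_. \<mu>)))) \<partial>M)"
          unfolding ElnY unfolding lnY ..
        also have "\<dots> = (\<integral>\<^sup>+e. exp (\<sigma> * t * (PL.Phi W c walk_pos n e - (\<integral>e. PL.Phi W c walk_pos n e \<partial>PiM I (\<lambda>_. \<mu>)))) \<partial>distr M (PiM I (\<lambda>_. \<mu>)) V)"
          by (rule nn_integral_distr[symmetric, OF Vm]) (use Phim in measurable)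
        also have "\<dots> \<le> ennreal (exp (real n * (2 * PL.L * PL.L') * t\<^sup>2))"
          unfolding distrV unfolding I_def by (rule PL.main_bound[OF good]) (use t \<sigma> in auto)
        finally show ?thesis unfolding K_eq .
      qed
      have int: "integrable M (\<lambda>\<omega>. exp (\<sigma> * t * (ln (Y n \<omega>) - (\<integral>\<omega>'. ln (Y n \<omega>') \<partial>M))))"
        by (rule integrableI_bounded) (use Fm nn in \<open>auto simp: le_less_trans\<close>)
      have "ennreal (\<integral>\<omega>. exp (\<sigma> * t * (ln (Y n \<omega>) - (\<integral>\<omega>'. ln (Y n \<omega>') \<partial>M))) \<partial>M) \<le> ennreal (exp (real n * K * t\<^sup>2))"
        using nn nn_integral_eq_integral[OF int] by simp
      then show "integrable M (\<lambda>\<omega>. exp (\<sigma> * t * (ln (Y n \<omega>) - (\<integral>\<omega>'. ln (Y n \<omega>') \<partial>M)))) \<and>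
        (\<integral>\<omega>. exp (\<sigma> * t * (ln (Y n \<omega>) - (\<integral>\<omega>'. ln (Y n \<omega>') \<partial>M))) \<partial>M) \<le> exp (real n * K * t\<^sup>2)"
        using int by (simp add: ennreal_le_iff)
    qed
    have tail: "\<forall>x>0. measure M {\<omega> \<in> space M. \<sigma> * (1 / real n) * (ln (Y n \<omega>) - (\<integral>\<omega>'. ln (Y n \<omega>') \<partial>M)) > x}
                \<le> (if x \<le> 2 * K then exp (- (real n * x\<^sup>2) / (4 * K)) else exp (- real n * (x - K)))"
    proof (intro allI impI)
      fix x :: real assume x: "0 < x"
      show "measure M {\<omega> \<in> space M. \<sigma> * (1 / real n) * (ln (Y n \<omega>) - (\<integral>\<omega>'. ln (Y n \<omega>') \<partial>M)) > x}
                \<le> (if x \<le> 2 * K then exp (- (real n * x\<^sup>2) / (4 * K)) else exp (- real n * (x - K)))"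
        using chernoff[OF P Fm _ Kpos tb x] n by simp
    qed
    show "integrable M (\<lambda>\<omega>. ln (Y n \<omega>)) \<and>
           (\<forall>t \<in> {0..1::real}.
              integrable M (\<lambda>\<omega>. exp (\<sigma> * t * (ln (Y n \<omega>)
                   - prob_space.expectation M (\<lambda>\<omega>'. ln (Y n \<omega>'))))) \<and>
              prob_space.expectation M (\<lambda>\<omega>. exp (\<sigma> * t * (ln (Y n \<omega>)
                   - prob_space.expectation M (\<lambda>\<omega>'. ln (Y n \<omega>')))))
                \<le> exp (real n * K * t\<^sup>2)) \<and>
           (\<forall>x > 0.
              measure M {\<omega> \<in> space M. \<sigma> * (1 / real n) * (ln (Y n \<omega>)
                   - prob_space.expectation M (\<lambda>\<omega>'. ln (Y n \<omega>'))) > x}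
                \<le> (if x \<le> 2 * K then exp (- (real n * x\<^sup>2) / (4 * K))
                    else exp (- real n * (x - K))))"
      using intlnY tb tail by blast
  qed
qed


end
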